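(* Let $q=p^k$ with $p$ prime, and let $L\subseteq[q-1]$. Let $\mathcal{F}\subseteq2^{[n]}$ be $q$-modular $L$-differencing Sperner. If $\sum_{\ell\in L}v_p(\ell)<k$, then $$|\mathcal{F}|\le\sum_{i=0}^{|L|}\binom{n}{i}.$$
   Context: $v_p(m)$ is the exponent of $p$ in the integer $m$. For $L\subseteq[q-1]$, $\mathcal{F}\subseteq2^{[n]}$ is $q$-modular $L$-differencing Sperner if for all distinct $A,B\in\mathcal{F}$, $|A\setminus B|\equiv\ell\pmod q$ for some $\ell\in L$. *)

theory Defs
  imports "HOL-Computational_Algebra.Primes" "HOL-Number_Theory.Cong"
begin

definition mod_L_diff_sperner :: "nat \<Rightarrow> nat set \<Rightarrow> nat set set \<Rightarrow> bool" where
  "mod_L_diff_sperner q L F \<longleftrightarrow>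
     (\<forall>A\<in>F. \<forall>B\<in>F. A \<noteq> B \<longrightarrow> (\<exists>l\<in>L. [card (A - B) = l] (mod q)))"

end

theory Submission imports Defs Complex_Main "HOL-Library.Function_Algebras" begin

definition fscale :: "rat \<Rightarrow> (nat set \<Rightarrow> rat) \<Rightarrow> (nat set \<Rightarrow> rat)" where
  "fscale c f = (\<lambda>x. c * f x)"

interpretation fv: vector_space fscale
  by unfold_locales (auto simp: fscale_def fun_eq_iff algebra_simps)

definition monoms :: "nat set \<Rightarrow> nat set \<Rightarrow> rat" where
  "monoms S B = (if S \<subseteq> B then 1 else 0)"

definition Vsp :: "nat set \<Rightarrow> nat \<Rightarrow> (nat set \<Rightarrow> rat) set" where
  "Vsp N j = fv.span (monoms ` {S. S \<subseteq> N \<and> card S \<le> j})"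

lemma Vsp_mono: "j \<le> j' \<Longrightarrow> Vsp N j \<subseteq> Vsp N j'"
  unfolding Vsp_def by (intro fv.span_mono) auto

lemma mult_Vsp:
  assumes "h \<in> Vsp N j" "i \<in> N" "finite N"
  shows "monoms {i} * h \<in> Vsp N (Suc j)"
  using assms(1) unfolding Vsp_def
proof (induction rule: fv.span_induct_alt)
  case base
  then show ?case by (metis func_zero fv.span_zero mult_zero_right)
next
  case (step c x y)
  then obtain S where S: "x = monoms S" "S \<subseteq> N" "card S \<le> j" by auto
  have "monoms {i} * x = monoms (insert i S)"
    by (auto simp: S monoms_def fun_eq_iff)
  moreover have "card (insert i S) \<le> Suc j"
    proof -
    have "finite S" using S assms(3) finite_subset by blast
    then show ?thesis using S(3) by (simp add: card_insert_if)
  qed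
  ultimately have "monoms {i} * x \<in> fv.span (monoms ` {S. S \<subseteq> N \<and> card S \<le> Suc j})"
    using S assms by (intro fv.span_base) auto
  then have "fscale c (monoms {i} * x) + monoms {i} * y \<in> fv.span (monoms ` {S. S \<subseteq> N \<and> card S \<le> Suc j})"
    using step by (intro fv.span_add fv.span_scale)
  moreover have "monoms {i} * (fscale c x + y) = fscale c (monoms {i} * x) + monoms {i} * y"
    by (auto simp: fscale_def fun_eq_iff algebra_simps)
  ultimately show ?case by metis
qed

lemma sum_apply: "(sum f A) x = sum (\<lambda>i. f i x) A"
  by (induction A rule: infinite_finite_induct) (auto simp: func_zero func_plus)

lemma lin_Vsp:
  assumes "h \<in> Vsp N j" "A \<subseteq> N" "finite N"
  shows "(\<lambda>B. (of_nat (card (A - B)) - c) * h B) \<in> Vsp N (Suc j)"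
proof -
  have fA: "finite A" using assms finite_subset by blast
  have card: "of_nat (card (A - B)) = of_nat (card A) - (\<Sum>i\<in>A. monoms {i} B)" for B :: "nat set"
  proof -
    have "card A = card (A - B) + card (A \<inter> B)"
      using fA by (metis card_Diff_subset_Int card_mono Int_lower1 le_add_diff_inverse2 finite_Int Diff_Diff_Int inf_commute)
    moreover have "(\<Sum>i\<in>A. monoms {i} B) = of_nat (card (A \<inter> B))"
    proof -
      have "(\<Sum>i\<in>A. monoms {i} B) = (\<Sum>i\<in>A. if i \<in> B then 1 else 0)"
        by (auto simp: monoms_def intro: sum.cong)
      also have "\<dots> = of_nat (card (A \<inter> B))"
        using fA by (simp add: sum.If_cases Int_def)
      finally show ?thesis .
    qed
    ultimately show ?thesis by simp
  qed
  have eq: "(\<lambda>B. (of_nat (card (A - B)) - c) * h B) =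
      fscale (of_nat (card A) - c) h - (\<Sum>i\<in>A. monoms {i} * h)"
  proof
    fix B
    have "(of_nat (card (A - B)) - c) * h B = (of_nat (card A) - c) * h B - (\<Sum>i\<in>A. monoms {i} B * h B)"
      unfolding card by (simp only: left_diff_distrib sum_distrib_right)
    then show "(of_nat (card (A - B)) - c) * h B = (fscale (of_nat (card A) - c) h - (\<Sum>i\<in>A. monoms {i} * h)) B"
      by (simp add: fscale_def sum_apply)
  qed
  have hS: "h \<in> Vsp N (Suc j)" using assms Vsp_mono[of j "Suc j" N] by auto
  show ?thesis unfolding eq unfolding Vsp_def
    apply (intro fv.span_diff fv.span_scale fv.span_sum)
    using hS mult_Vsp[OF assms(1) _ assms(3)] assms(2) unfolding Vsp_def by auto
qed

lemma prod_Vsp: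
  assumes "finite L" "A \<subseteq> N" "finite N"
  shows "(\<lambda>B. \<Prod>l\<in>L. (of_nat (card (A - B)) - of_nat l)) \<in> Vsp N (card L)"
  using assms(1)
proof (induction L rule: finite_induct)
  case empty
  have "(\<lambda>B. 1) = monoms {}" by (auto simp: monoms_def fun_eq_iff)
  then show ?case unfolding Vsp_def by (auto intro!: fv.span_base)
next
  case (insert x F)
  have "(\<lambda>B. (of_nat (card (A - B)) - of_nat x) * (\<Prod>l\<in>F. (of_nat (card (A - B)) - of_nat l))) \<in> Vsp N (Suc (card F))"
    by (rule lin_Vsp[OF insert.IH assms(2,3)])
  then show ?case using insert by simp
qed


lemma card_idx: "card {S. S \<subseteq> {1..n::nat} \<and> card S \<le> m} = (\<Sum>i=0..m. n choose i)"
proof -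
  have eq: "{S. S \<subseteq> {1..n::nat} \<and> card S \<le> m} = (\<Union>i\<in>{0..m}. {S. S \<subseteq> {1..n} \<and> card S = i})"
    by auto
  have "card (\<Union>i\<in>{0..m}. {S. S \<subseteq> {1..n} \<and> card S = i}) = (\<Sum>i=0..m. card {S. S \<subseteq> {1..n::nat} \<and> card S = i})"
    by (intro card_UN_disjoint) auto
  also have "\<dots> = (\<Sum>i=0..m. n choose i)"
    by (intro sum.cong refl) (simp add: n_subsets)
  finally show ?thesis using eq by simp
qed

lemma clear_denoms:
  "finite T \<Longrightarrow> \<exists>d::int. d > 0 \<and> (\<forall>x\<in>T. \<exists>z::int. of_int d * (c x :: rat) = of_int z)"
proof (induction T rule: finite_induct)
  case empty
  then show ?case by (intro exI[of _ 1]) auto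
next
  case (insert x T)
  then obtain d where d: "d > 0" "\<forall>y\<in>T. \<exists>z::int. of_int d * c y = of_int z" by blast
  obtain a b where ab: "quotient_of (c x) = (a, b)" by (cases "quotient_of (c x)")
  have b: "b > 0" using quotient_of_denom_pos[OF ab] .
  have cx: "c x = of_int a / of_int b" using quotient_of_div[OF ab] .
  have "\<forall>y\<in>insert x T. \<exists>z::int. of_int (d * b) * c y = of_int z"
  proof
    fix y assume "y \<in> insert x T"
    then show "\<exists>z::int. of_int (d * b) * c y = of_int z"
    proof
      assume "y = x"
      then show ?thesis using b by (intro exI[of _ "d * a"]) (simp add: cx)
    next
      assume "y \<in> T"
      then obtain z where "of_int d * c y = of_int z" using d by blast
      then show ?thesis by (intro exI[of _ "z * b"]) (simp add: algebra_simps)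
    qed
  qed
  moreover have "d * b > 0" using d b by simp
  ultimately show ?case by blast
qed

lemma core:
  fixes e :: "'x \<Rightarrow> int" and G :: "'x \<Rightarrow> 'x \<Rightarrow> int" and P :: int
  assumes P: "prime P" and T: "finite T" and a: "a \<in> T" "e a \<noteq> 0"
    and sum0: "\<And>B. B \<in> T \<Longrightarrow> (\<Sum>A\<in>T. e A * G A B) = 0"
    and diag: "\<And>A. A \<in> T \<Longrightarrow> \<not> P ^ Suc s dvd G A A"
    and off: "\<And>A B. A \<in> T \<Longrightarrow> B \<in> T \<Longrightarrow> A \<noteq> B \<Longrightarrow> P ^ Suc s dvd G A B"
  shows False
proof -
  define Z where "Z = {A\<in>T. e A \<noteq> 0}"
  have Zf: "finite Z" "Z \<noteq> {}" using T a by (auto simp: Z_def)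
  define r where "r = Min ((\<lambda>A. multiplicity P (e A)) ` Z)"
  have "r \<in> (\<lambda>A. multiplicity P (e A)) ` Z" using Zf unfolding r_def by (intro Min_in) auto
  then obtain A0 where A0: "A0 \<in> Z" "multiplicity P (e A0) = r" by auto
  have nu: "\<not> is_unit P" using P not_prime_unit by blast
  have dv: "P ^ r dvd e A" if "A \<in> T" for A
  proof (cases "e A = 0")
    case False
    then have "A \<in> Z" using that by (auto simp: Z_def)
    then have "r \<le> multiplicity P (e A)" unfolding r_def using Zf by (intro Min_le) auto
    then show ?thesis by (rule multiplicity_dvd')
  qed simp
  have A0T: "A0 \<in> T" and eA0: "e A0 \<noteq> 0" using A0 by (auto simp: Z_def)
  have "(\<Sum>A\<in>T. e A * G A A0) = e A0 * G A0 A0 + (\<Sum>A\<in>T-{A0}. e A * G A A0)"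
    by (rule sum.remove[OF T A0T])
  then have eq: "e A0 * G A0 A0 = - (\<Sum>A\<in>T-{A0}. e A * G A A0)"
    using sum0[OF A0T] by simp
  have "P ^ r * P ^ Suc s dvd (\<Sum>A\<in>T-{A0}. e A * G A A0)"
  proof (rule dvd_sum)
    fix A assume "A \<in> T - {A0}"
    show "P ^ r * P ^ Suc s dvd e A * G A A0"
    proof -
      have "A \<in> T" "A \<noteq> A0" using \<open>A \<in> T - {A0}\<close> by auto
      then show ?thesis using mult_dvd_mono[OF dv[of A] off[of A A0]] A0T by simp
    qed
  qed
  then have d1: "P ^ r * P ^ Suc s dvd e A0 * G A0 A0" unfolding eq by simp
  obtain y where y: "e A0 = P ^ multiplicity P (e A0) * y" "\<not> P dvd y"
    by (rule multiplicity_decompose'[OF eA0 nu])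
  have ey: "e A0 = P ^ r * y" using y(1) unfolding A0(2) .
  have "P ^ r * P ^ Suc s dvd P ^ r * (y * G A0 A0)"
    using d1 by (simp only: ey mult.assoc)
  moreover have P0: "P ^ r \<noteq> 0" using P by (simp add: prime_gt_0_int)
  ultimately have "P ^ Suc s dvd y * G A0 A0"
    using dvd_times_left_cancel_iff[OF P0] by blast
  moreover have "coprime P y" by (rule prime_imp_coprime[OF P y(2)])
  then have "coprime (P ^ Suc s) y" by simp
  ultimately have "P ^ Suc s dvd G A0 A0"
    using coprime_dvd_mult_right_iff[of "P ^ Suc s" y "G A0 A0"] by blast
  then show False using diag[OF A0T] by simp
qed


theorem mainTheorem12:
  fixes p k q n :: nat and L :: "nat set" and F :: "nat set set"
  assumes "prime p" and "q = p ^ k"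
    and "L \<subseteq> {1..q-1}"
    and "F \<subseteq> Pow {1..n}"
    and "mod_L_diff_sperner q L F"
    and "(\<Sum>l\<in>L. multiplicity p l) < k"
  shows "card F \<le> (\<Sum>i=0..card L. n choose i)"
proof -
  note pr = assms(1)
  define s where "s = (\<Sum>l\<in>L. multiplicity p l)"
  have sk: "Suc s \<le> k" using assms(6) s_def by simp
  have Lf: "finite L" using assms(3) finite_subset by blast
  have L0: "0 \<notin> L" using assms(3) by auto
  have Ff: "finite F" using assms(4) finite_subset by (metis finite_Pow_iff finite_atLeastAtMost)
  have nup: "\<not> is_unit p" using pr not_prime_unit by blast
  define N where "N = (\<Prod>l\<in>L. l)"
  have N0: "N \<noteq> 0" using Lf L0 unfolding N_def by auto
  have multN: "multiplicity p N = s"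
    unfolding N_def s_def using pr L0 Lf
    by (intro prime_elem_multiplicity_prod_distrib) auto
  have notdvdN: "\<not> p ^ Suc s dvd N"
  proof
    assume "p ^ Suc s dvd N"
    then have "multiplicity p N \<ge> Suc s" using N0 nup by (intro multiplicity_geI) auto
    then show False using multN by simp
  qed
  define G where "G A B = (\<Prod>l\<in>L. int (card (A - B)) - int l)" for A B :: "nat set"
  define g where "g A = (\<lambda>B. rat_of_int (G A B))" for A :: "nat set"
  define P where "P = int p"
  have Pp: "prime P" using pr unfolding P_def by simp
  have diag: "\<not> P ^ Suc s dvd G A A" for A
  proof
    assume h: "P ^ Suc s dvd G A A"
    have GA: "\<bar>G A A\<bar> = int N" unfolding G_def N_def by (simp add: abs_prod of_nat_prod)
    have "int (p ^ Suc s) dvd int N" using h unfolding GA[symmetric] P_def by simp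
    then have "p ^ Suc s dvd N" by (simp only: int_dvd_int_iff)
    then show False using notdvdN by simp
  qed
  have off: "P ^ Suc s dvd G A B" if "A \<in> F" "B \<in> F" "A \<noteq> B" for A B
  proof -
    have h5: "\<forall>A\<in>F. \<forall>B\<in>F. A \<noteq> B \<longrightarrow> (\<exists>l\<in>L. [card (A - B) = l] (mod q))"
      using assms(5) unfolding mod_L_diff_sperner_def .
    have "\<exists>l\<in>L. [card (A - B) = l] (mod q)"
      using mp[OF bspec[OF bspec[OF h5 that(1)] that(2)] that(3)] .
    then obtain l where l: "l \<in> L" "[card (A - B) = l] (mod q)" by (rule bexE)
    have "[int (card (A - B)) = int l] (mod int q)" using l(2) by (simp only: cong_int_iff)
    then have "int q dvd int (card (A - B)) - int l" by (simp only: cong_iff_dvd_diff)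
    also have "\<dots> dvd G A B" unfolding G_def
      by (rule dvd_prodI[OF Lf l(1), of "\<lambda>l. int (card (A - B)) - int l"])
    finally have "int (p ^ k) dvd G A B" unfolding assms(2) .
    then have "P ^ k dvd G A B" unfolding P_def by simp
    moreover have "P ^ Suc s dvd P ^ k" using sk by (rule le_imp_power_dvd)
    ultimately show ?thesis by (rule dvd_trans[rotated])
  qed
  have g_eq: "g A = (\<lambda>B. \<Prod>l\<in>L. (of_nat (card (A - B)) - of_nat l))" for A
    by (simp add: g_def G_def of_int_prod)
  have gV: "g A \<in> Vsp {1..n} (card L)" if "A \<in> F" for A
    unfolding g_eq using Lf assms(4) that by (intro prod_Vsp) auto
  have inj: "inj_on g F"
  proof
    fix A B assume AB: "A \<in> F" "B \<in> F" "g A = g B"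
    show "A = B"
    proof (rule ccontr)
      assume "A \<noteq> B"
      have "rat_of_int (G A A) = rat_of_int (G B A)" using AB(3) unfolding g_def by metis
      then have "G A A = G B A" by simp
      then show False using off[OF AB(2,1)] \<open>A \<noteq> B\<close> diag[of A] by simp
    qed
  qed
  have indep: "fv.independent (g ` F)"
    unfolding fv.independent_explicit_finite_subsets
  proof (intro allI impI ballI)
    fix S c v assume SF: "S \<subseteq> g ` F" and Sf: "finite S"
      and sum0: "(\<Sum>v\<in>S. fscale (c v) v) = 0" and v: "v \<in> S"
    define F' where "F' = {A\<in>F. g A \<in> S}"
    have F'F: "F' \<subseteq> F" unfolding F'_def by auto
    have F'f: "finite F'" using Ff F'F finite_subset by blast
    have SF': "S = g ` F'" using SF unfolding F'_def by auto
    have inj': "inj_on g F'" using inj F'F inj_on_subset by blast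
    show "c v = 0"
    proof (rule ccontr)
      assume cv: "c v \<noteq> 0"
      obtain a where a: "a \<in> F'" "v = g a" using v SF' by blast
      have s1: "(\<Sum>A\<in>F'. fscale (c (g A)) (g A)) = 0"
        using sum0 unfolding SF' by (simp add: sum.reindex[OF inj'])
      have s2: "(\<Sum>A\<in>F'. c (g A) * g A B) = 0" for B
      proof -
        have "(\<Sum>A\<in>F'. fscale (c (g A)) (g A)) B = 0" using s1 by (simp add: func_zero)
        then show ?thesis by (simp add: sum_apply fscale_def)
      qed
      obtain d where d: "d > 0" "\<forall>A\<in>F'. \<exists>z::int. of_int d * c (g A) = of_int z"
        using clear_denoms[OF F'f, of "\<lambda>A. c (g A)"] by blast
      obtain z where z: "\<forall>A\<in>F'. of_int d * c (g A) = rat_of_int (z A)"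
        using bchoice[OF d(2)] by blast
      have zs: "(\<Sum>A\<in>F'. z A * G A B) = 0" if "B \<in> F'" for B
      proof -
        have "rat_of_int (\<Sum>A\<in>F'. z A * G A B) = (\<Sum>A\<in>F'. of_int d * c (g A) * g A B)"
          using z by (simp add: g_def)
        also have "\<dots> = of_int d * (\<Sum>A\<in>F'. c (g A) * g A B)"
          by (simp add: sum_distrib_left mult.assoc)
        also have "\<dots> = 0" using s2[of B] by simp
        finally have "rat_of_int (\<Sum>A\<in>F'. z A * G A B) = 0" .
        then show ?thesis by (simp only: of_int_eq_0_iff)
      qed
      have za: "z a \<noteq> 0"
      proof
        assume "z a = 0"
        then have "of_int d * c (g a) = 0" using z a(1) by simp
        then show False using d(1) cv a(2) by simp
      qed
      have diag': "\<not> P ^ Suc s dvd G A A" if "A \<in> F'" for A using diag .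
      have off': "P ^ Suc s dvd G A B" if "A \<in> F'" "B \<in> F'" "A \<noteq> B" for A B
        using off that F'F by blast
      show False
        by (rule core[OF Pp F'f a(1), of z G s, OF za zs diag' off'])
    qed
  qed
  define Idx where "Idx = {S. S \<subseteq> {1..n::nat} \<and> card S \<le> card L}"
  have Idxf: "finite Idx" unfolding Idx_def by (rule finite_subset[of _ "Pow {1..n}"]) auto
  have sub: "g ` F \<subseteq> fv.span (monoms ` Idx)"
    using gV unfolding Vsp_def Idx_def by auto
  have "card (g ` F) \<le> card (monoms ` Idx)"
    using fv.independent_span_bound[OF finite_imageI[OF Idxf] indep sub] by simp
  also have "\<dots> \<le> card Idx" by (rule card_image_le[OF Idxf])
  also have "\<dots> = (\<Sum>i=0..card L. n choose i)" unfolding Idx_def by (rule card_idx)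
  finally show ?thesis using card_image[OF inj] by simp
qed

end
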